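(* There exist instances (with three advertisers, a joint distribution of their values, information structures with and without the data, and a price of the data) of the two-stage game in which advertisers first simultaneously decide whether to purchase a data source and then bid optimally in a second-price auction, such that the purchase-stage game has no pure strategy equilibrium.
   Context: In the purchase stage each advertiser pays a fixed price for the data if she buys it; buying the data reveals (more) information about her value. Afterwards, each advertiser bids in a second-price auction given her information, and payoffs are expected auction utility minus the price paid for data. *)

theory Defs
  imports "HOL-Probability.Probability"
begin

text \<open>
Omega :: nat pmf             -- joint distribution of the state of the world (finite support)
  v i w                        -- value of advertiser i in state w
  sigN i w, sigD i w           -- signal observed by advertiser i without / with the data
  p                            -- price of the data
The set of advertisers is a finite set N (in the theorem N = {0,1,2}).
\<close>

definition signal_of :: "(nat \<Rightarrow> nat \<Rightarrow> nat) \<Rightarrow> (nat \<Rightarrow> nat \<Rightarrow> nat) \<Rightarrow> (nat \<Rightarrow> bool) \<Rightarrow> nat \<Rightarrow> nat \<Rightarrow> nat" where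
  "signal_of sigN sigD a i = (if a i then sigD i else sigN i)"

text \<open>Posterior expected value of advertiser i given her information; by weak dominance this
is her optimal bid in the second-price auction.\<close>
definition opt_bid :: "nat pmf \<Rightarrow> (nat \<Rightarrow> nat \<Rightarrow> real) \<Rightarrow> (nat \<Rightarrow> nat) \<Rightarrow> nat \<Rightarrow> nat \<Rightarrow> real" where
  "opt_bid Omega v sig i w =
     measure_pmf.expectation (cond_pmf Omega {w'. sig w' = sig w}) (v i)"

text \<open>Ex-post utility of advertiser i in a second-price auction with bids b and true value x;
ties among highest bidders are broken uniformly at random; the winner pays the highest
competing bid.\<close>
definition spa_utility :: "nat set \<Rightarrow> (nat \<Rightarrow> real) \<Rightarrow> nat \<Rightarrow> real \<Rightarrow> real" where
  "spa_utility N b i x =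
     (let W = {j \<in> N. b j = Max (b ` N)} in
      if i \<in> W then (x - Max (b ` (N - {i}))) / real (card W) else 0)"

definition purchase_payoff ::
  "nat set \<Rightarrow> nat pmf \<Rightarrow> (nat \<Rightarrow> nat \<Rightarrow> real) \<Rightarrow> (nat \<Rightarrow> nat \<Rightarrow> nat) \<Rightarrow> (nat \<Rightarrow> nat \<Rightarrow> nat)
     \<Rightarrow> real \<Rightarrow> (nat \<Rightarrow> bool) \<Rightarrow> nat \<Rightarrow> real" where
  "purchase_payoff N Omega v sigN sigD p a i =
     measure_pmf.expectation Omega
       (\<lambda>w. spa_utility N (\<lambda>j. opt_bid Omega v (signal_of sigN sigD a j) j w) i (v i w))
     - (if a i then p else 0)"

definition pure_NE ::
  "nat set \<Rightarrow> nat pmf \<Rightarrow> (nat \<Rightarrow> nat \<Rightarrow> real) \<Rightarrow> (nat \<Rightarrow> nat \<Rightarrow> nat) \<Rightarrow> (nat \<Rightarrow> nat \<Rightarrow> nat)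
     \<Rightarrow> real \<Rightarrow> (nat \<Rightarrow> bool) \<Rightarrow> bool" where
  "pure_NE N Omega v sigN sigD p a \<longleftrightarrow>
     (\<forall>i\<in>N. \<forall>d. purchase_payoff N Omega v sigN sigD p (a(i := d)) i
                \<le> purchase_payoff N Omega v sigN sigD p a i)"

definition data_refines :: "nat pmf \<Rightarrow> (nat \<Rightarrow> nat) \<Rightarrow> (nat \<Rightarrow> nat) \<Rightarrow> bool" where
  "data_refines Omega sD sN \<longleftrightarrow> (\<exists>g. \<forall>w\<in>set_pmf Omega. sN w = g (sD w))"

end

theory Submission
  imports Defs
begin

definition Om :: "nat pmf" where "Om = pmf_of_set {0,1}"
definition vv :: "nat \<Rightarrow> nat \<Rightarrow> real" where
  "vv i w = (if w = 0 then (if i = 2 then 1 else 0) else 3)"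
definition sN :: "nat \<Rightarrow> nat \<Rightarrow> nat" where "sN i w = 0"
definition sD :: "nat \<Rightarrow> nat \<Rightarrow> nat" where "sD i w = w"

lemma set_Om[simp]: "set_pmf Om = {0,1}"
  by (simp add: Om_def)

lemma cond_UNIV: "cond_pmf Om UNIV = Om"
proof (rule pmf_eqI)
  fix x
  have ne: "set_pmf Om \<inter> UNIV \<noteq> {}" by simp
  show "pmf (cond_pmf Om UNIV) x = pmf Om x"
    using pmf_cond[OF ne, of x] by (simp add: measure_pmf.prob_space)
qed

lemma cond_single: "w \<in> {0,1} \<Longrightarrow> cond_pmf Om {w} = return_pmf w"
proof -
  assume w: "w \<in> {0,1}"
  have ne: "set_pmf Om \<inter> {w} \<noteq> {}" using w by auto
  have "set_pmf (cond_pmf Om {w}) \<subseteq> {w}"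
    using set_cond_pmf[OF ne] by auto
  thus ?thesis by (simp add: set_pmf_subset_singleton)
qed

lemma exp_Om: "measure_pmf.expectation Om (f::nat\<Rightarrow>real) = (f 0 + f (Suc 0)) / 2"
  by (simp add: Om_def integral_pmf_of_set)

lemma bid: "w \<in> {0,1} \<Longrightarrow> opt_bid Om vv (signal_of sN sD a j) j w =
    (if a j then vv j w else (vv j 0 + vv j 1) / 2)"
  by (auto simp: opt_bid_def signal_of_def sN_def sD_def cond_single cond_UNIV exp_Om)

lemma payoff: "purchase_payoff N Om vv sN sD p a i =
   (spa_utility N (\<lambda>j. if a j then vv j 0 else (vv j 0 + vv j 1) / 2) i (vv i 0)
  + spa_utility N (\<lambda>j. if a j then vv j (Suc 0) else (vv j 0 + vv j 1) / 2) i (vv i (Suc 0))) / 2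
   - (if a i then p else 0)"
  by (simp add: purchase_payoff_def exp_Om bid)

lemma filt: "{j \<in> {0,1,2::nat}. P j} =
   (if P 0 then {0} else {}) \<union> (if P 1 then {1} else {}) \<union> (if P 2 then {2} else {})"
  by (rule set_eqI) (auto split: if_splits; metis gr0I)

definition prof :: "bool \<Rightarrow> bool \<Rightarrow> bool \<Rightarrow> nat \<Rightarrow> bool" where
  "prof x y z j = (if j = 0 then x else if j = 1 then y else z)"

lemma spa_cong: "(\<forall>j\<in>N. b j = b' j) \<Longrightarrow> spa_utility N b i x = spa_utility N b' i x"
proof -
  assume h: "\<forall>j\<in>N. b j = b' j"
  have 1: "b ` N = b' ` N" using h by (auto intro: image_cong)
  have 2: "b ` (N - {i}) = b' ` (N - {i})" using h by (auto intro: image_cong)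
  have 3: "{j \<in> N. b j = Max (b ` N)} = {j \<in> N. b' j = Max (b' ` N)}" using h 1 by auto
  show ?thesis unfolding spa_utility_def using 1 2 3 by simp
qed

lemma reduce: "purchase_payoff {0,1,2} Om vv sN sD p a i =
   purchase_payoff {0,1,2} Om vv sN sD p (prof (a 0) (a 1) (a 2)) i" if "i \<in> {0,1,2}"
proof -
  let ?a = "prof (a 0) (a 1) (a 2)"
  have e: "\<forall>j\<in>{0,1,2::nat}. (if a j then vv j w else c j) = (if ?a j then vv j w else c j)" for w c
    by (simp add: prof_def)
  have ei: "a i = ?a i" using that by (auto simp: prof_def)
  show ?thesis unfolding payoff
    by (simp only: spa_cong[OF e] ei)
qed

lemmas C = payoff spa_utility_def filt vv_def Let_def insert_Diff_if prof_def

lemma val1: "purchase_payoff {0,1,2} Om vv sN sD (1/8) (prof False False False) 0 = (0::real)"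
  by (simp only: payoff spa_utility_def filt Let_def) (simp add: vv_def insert_Diff_if prof_def)

lemma val2: "purchase_payoff {0,1,2} Om vv sN sD (1/8) (prof False False False) 1 = (0::real)"
  by (simp only: payoff spa_utility_def filt Let_def) (simp add: vv_def insert_Diff_if prof_def)

lemma val3: "purchase_payoff {0,1,2} Om vv sN sD (1/8) (prof False False False) 2 = (1/2::real)"
  by (simp only: payoff spa_utility_def filt Let_def) (simp add: vv_def insert_Diff_if prof_def)

lemma val4: "purchase_payoff {0,1,2} Om vv sN sD (1/8) (prof False False True) 0 = (-3/8::real)"
  by (simp only: payoff spa_utility_def filt Let_def) (simp add: vv_def insert_Diff_if prof_def)

lemma val5: "purchase_payoff {0,1,2} Om vv sN sD (1/8) (prof False False True) 1 = (-3/8::real)"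
  by (simp only: payoff spa_utility_def filt Let_def) (simp add: vv_def insert_Diff_if prof_def)

lemma val6: "purchase_payoff {0,1,2} Om vv sN sD (1/8) (prof False False True) 2 = (5/8::real)"
  by (simp only: payoff spa_utility_def filt Let_def) (simp add: vv_def insert_Diff_if prof_def)

lemma val7: "purchase_payoff {0,1,2} Om vv sN sD (1/8) (prof False True False) 0 = (0::real)"
  by (simp only: payoff spa_utility_def filt Let_def) (simp add: vv_def insert_Diff_if prof_def)

lemma val8: "purchase_payoff {0,1,2} Om vv sN sD (1/8) (prof False True False) 1 = (3/8::real)"
  by (simp only: payoff spa_utility_def filt Let_def) (simp add: vv_def insert_Diff_if prof_def)

lemma val9: "purchase_payoff {0,1,2} Om vv sN sD (1/8) (prof False True False) 2 = (-1/4::real)"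
  by (simp only: payoff spa_utility_def filt Let_def) (simp add: vv_def insert_Diff_if prof_def)

lemma val10: "purchase_payoff {0,1,2} Om vv sN sD (1/8) (prof False True True) 0 = (-1/2::real)"
  by (simp only: payoff spa_utility_def filt Let_def) (simp add: vv_def insert_Diff_if prof_def)

lemma val11: "purchase_payoff {0,1,2} Om vv sN sD (1/8) (prof False True True) 1 = (-1/8::real)"
  by (simp only: payoff spa_utility_def filt Let_def) (simp add: vv_def insert_Diff_if prof_def)

lemma val12: "purchase_payoff {0,1,2} Om vv sN sD (1/8) (prof False True True) 2 = (-1/8::real)"
  by (simp only: payoff spa_utility_def filt Let_def) (simp add: vv_def insert_Diff_if prof_def)

lemma val13: "purchase_payoff {0,1,2} Om vv sN sD (1/8) (prof True False False) 0 = (3/8::real)"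
  by (simp only: payoff spa_utility_def filt Let_def) (simp add: vv_def insert_Diff_if prof_def)

lemma val14: "purchase_payoff {0,1,2} Om vv sN sD (1/8) (prof True False False) 1 = (0::real)"
  by (simp only: payoff spa_utility_def filt Let_def) (simp add: vv_def insert_Diff_if prof_def)

lemma val15: "purchase_payoff {0,1,2} Om vv sN sD (1/8) (prof True False False) 2 = (-1/4::real)"
  by (simp only: payoff spa_utility_def filt Let_def) (simp add: vv_def insert_Diff_if prof_def)

lemma val16: "purchase_payoff {0,1,2} Om vv sN sD (1/8) (prof True False True) 0 = (-1/8::real)"
  by (simp only: payoff spa_utility_def filt Let_def) (simp add: vv_def insert_Diff_if prof_def)

lemma val17: "purchase_payoff {0,1,2} Om vv sN sD (1/8) (prof True False True) 1 = (-1/2::real)"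
  by (simp only: payoff spa_utility_def filt Let_def) (simp add: vv_def insert_Diff_if prof_def)

lemma val18: "purchase_payoff {0,1,2} Om vv sN sD (1/8) (prof True False True) 2 = (-1/8::real)"
  by (simp only: payoff spa_utility_def filt Let_def) (simp add: vv_def insert_Diff_if prof_def)

lemma val19: "purchase_payoff {0,1,2} Om vv sN sD (1/8) (prof True True False) 0 = (-1/8::real)"
  by (simp only: payoff spa_utility_def filt Let_def) (simp add: vv_def insert_Diff_if prof_def)

lemma val20: "purchase_payoff {0,1,2} Om vv sN sD (1/8) (prof True True False) 1 = (-1/8::real)"
  by (simp only: payoff spa_utility_def filt Let_def) (simp add: vv_def insert_Diff_if prof_def)

lemma val21: "purchase_payoff {0,1,2} Om vv sN sD (1/8) (prof True True False) 2 = (1/2::real)"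
  by (simp only: payoff spa_utility_def filt Let_def) (simp add: vv_def insert_Diff_if prof_def)

lemma val22: "purchase_payoff {0,1,2} Om vv sN sD (1/8) (prof True True True) 0 = (-1/8::real)"
  by (simp only: payoff spa_utility_def filt Let_def) (simp add: vv_def insert_Diff_if prof_def)

lemma val23: "purchase_payoff {0,1,2} Om vv sN sD (1/8) (prof True True True) 1 = (-1/8::real)"
  by (simp only: payoff spa_utility_def filt Let_def) (simp add: vv_def insert_Diff_if prof_def)

lemma val24: "purchase_payoff {0,1,2} Om vv sN sD (1/8) (prof True True True) 2 = (3/8::real)"
  by (simp only: payoff spa_utility_def filt Let_def) (simp add: vv_def insert_Diff_if prof_def)

lemmas V = val1 val2 val3 val4 val5 val6 val7 val8 val9 val10 val11 val12 val13 val14 val15 val16 val17 val18 val19 val20 val21 val22 val23 val24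
lemmas V1 = V[unfolded One_nat_def]

lemma noNE: "\<not> pure_NE {0,1,2} Om vv sN sD (1/8) a"
proof
  assume "pure_NE {0,1,2} Om vv sN sD (1/8) a"
  hence h0: "purchase_payoff {0,1,2} Om vv sN sD (1/8) (a(0 := \<not> a 0)) 0 \<le> purchase_payoff {0,1,2} Om vv sN sD (1/8) a 0"
    and h1: "purchase_payoff {0,1,2} Om vv sN sD (1/8) (a(1 := \<not> a 1)) 1 \<le> purchase_payoff {0,1,2} Om vv sN sD (1/8) a 1"
    and h2: "purchase_payoff {0,1,2} Om vv sN sD (1/8) (a(2 := \<not> a 2)) 2 \<le> purchase_payoff {0,1,2} Om vv sN sD (1/8) a 2"
    unfolding pure_NE_def by blast+
  have m: "(0::nat) \<in> {0,1,2}" "(1::nat) \<in> {0,1,2}" "(2::nat) \<in> {0,1,2}" by simp_all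
  have g0: "purchase_payoff {0,1,2} Om vv sN sD (1/8) (prof (\<not> a 0) (a 1) (a 2)) 0 \<le> purchase_payoff {0,1,2} Om vv sN sD (1/8) (prof (a 0) (a 1) (a 2)) 0"
    using reduce[where i=0 and p="1/8" and a=a, OF m(1)] reduce[where i=0 and p="1/8" and a="a(0 := \<not> a 0)", OF m(1)] h0
    by simp
  have g1: "purchase_payoff {0,1,2} Om vv sN sD (1/8) (prof (a 0) (\<not> a 1) (a 2)) 1 \<le> purchase_payoff {0,1,2} Om vv sN sD (1/8) (prof (a 0) (a 1) (a 2)) 1"
    using reduce[where i=1 and p="1/8" and a=a, OF m(2)] reduce[where i=1 and p="1/8" and a="a(1 := \<not> a 1)", OF m(2)] h1
    by simp
  have g2: "purchase_payoff {0,1,2} Om vv sN sD (1/8) (prof (a 0) (a 1) (\<not> a 2)) 2 \<le> purchase_payoff {0,1,2} Om vv sN sD (1/8) (prof (a 0) (a 1) (a 2)) 2"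
    using reduce[where i=2 and p="1/8" and a=a, OF m(3)] reduce[where i=2 and p="1/8" and a="a(2 := \<not> a 2)", OF m(3)] h2
    by simp
  show False using g0 g1 g2
    by (cases "a 0"; cases "a 1"; cases "a 2") (simp_all add: V V1)
qed

theorem mainTheorem11:
  shows "\<exists>(Omega :: nat pmf) (v :: nat \<Rightarrow> nat \<Rightarrow> real) (sigN :: nat \<Rightarrow> nat \<Rightarrow> nat)
            (sigD :: nat \<Rightarrow> nat \<Rightarrow> nat) (p :: real).
           finite (set_pmf Omega) \<and> p \<ge> 0 \<and>
           (\<forall>i\<in>{0,1,2}. \<forall>w\<in>set_pmf Omega. v i w \<ge> 0) \<and>
           (\<forall>i\<in>{0,1,2}. data_refines Omega (sigD i) (sigN i)) \<and>
           \<not> (\<exists>a. pure_NE {0,1,2} Omega v sigN sigD p a)"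
proof (intro exI conjI)
  show "finite (set_pmf Om)" by simp
  show "(0::real) \<le> 1/8" by simp
  show "\<forall>i\<in>{0,1,2}. \<forall>w\<in>set_pmf Om. vv i w \<ge> 0" by (simp add: vv_def)
  show "\<forall>i\<in>{0,1,2}. data_refines Om (sD i) (sN i)"
    by (auto simp: data_refines_def sN_def)
  show "\<not> (\<exists>a. pure_NE {0,1,2} Om vv sN sD (1/8) a)" using noNE by blast
qed

end
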